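(* Let $F\colon\mathsf{Set}\to\mathsf{Set}$ preserve intersections, and let $(C,c,i_C)$ be an $I$-pointed $F$-coalgebra. For every $k\in\mathbb N$, the $k$-th step $C_k\subseteq C$ of the construction of the reachable part of $(C,c,i_C)$ coincides with the $k$-th step of the construction of the reachable part of its canonical graph $(C,\tau_C\cdot c,i_C)$, regarded as an $I$-pointed $\mathcal P$-coalgebra.
   Context: On $\mathsf{Set}$ use the factorization system (surjective, injective). $F$ preserves intersections: preserves injective maps and intersections of subsets. For a functor $H$ preserving intersections and a map $f\colon X\to HY$, $\ominus_f(S)$ for $S\subseteq X$ is the least $Z\subseteq Y$ such that $f|_S$ factors through $HZ\to HY$ (image of the inclusion). For an $I$-pointed $H$-coalgebra $(C,d,i_C)$ (with $d\colon C\to HC$, $i_C\colon I\to C$), its $k$-th step is defined by $C_0=i_C[I]$ (the image of $i_C$) and $C_{k+1}=\ominus_d(C_k)$. $\mathcal P$ is the power-set functor. For each set $X$, $\tau_X\colon FX\to\mathcal P X$ is $\tau_X(t)=\{x\in X\mid t\notin Fi[F(X\setminus\{x\})]\}$ with $i\colon X\setminus\{x\}\hookrightarrow X$ the inclusion; $\tau_C\cdot c$ is the canonical graph. *)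

theory Defs
  imports Main "HOL-Library.FuncSet"
begin

text \<open>A set functor, represented on the category of subsets of a universe type 'a:
  Fobj X is the object part, and Fmap X Y f is the action of F on a map f : X \<rightarrow> Y
  (domain and codomain are explicit, so F need not preserve inclusions literally).\<close>

definition set_functor :: "('a set \<Rightarrow> 'b set) \<Rightarrow> ('a set \<Rightarrow> 'a set \<Rightarrow> ('a \<Rightarrow> 'a) \<Rightarrow> 'b \<Rightarrow> 'b) \<Rightarrow> bool" where
  "set_functor Fobj Fmap \<longleftrightarrow>
     (\<forall>X Y f. f \<in> X \<rightarrow> Y \<longrightarrow> Fmap X Y f \<in> Fobj X \<rightarrow> Fobj Y) \<and>
     (\<forall>X Y f g. (\<forall>x\<in>X. f x = g x) \<longrightarrow> (\<forall>t\<in>Fobj X. Fmap X Y f t = Fmap X Y g t)) \<and>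
     (\<forall>X. \<forall>t\<in>Fobj X. Fmap X X id t = t) \<and>
     (\<forall>X Y Z f g. f \<in> X \<rightarrow> Y \<longrightarrow> g \<in> Y \<rightarrow> Z \<longrightarrow>
        (\<forall>t\<in>Fobj X. Fmap X Z (g \<circ> f) t = Fmap Y Z g (Fmap X Y f t)))"

text \<open>Image of F applied to the inclusion Z \<hookrightarrow> X.\<close>
definition Fimg :: "('a set \<Rightarrow> 'b set) \<Rightarrow> ('a set \<Rightarrow> 'a set \<Rightarrow> ('a \<Rightarrow> 'a) \<Rightarrow> 'b \<Rightarrow> 'b) \<Rightarrow> 'a set \<Rightarrow> 'a set \<Rightarrow> 'b set" where
  "Fimg Fobj Fmap Z X = Fmap Z X id ` Fobj Z"

definition preserves_intersections :: "('a set \<Rightarrow> 'b set) \<Rightarrow> ('a set \<Rightarrow> 'a set \<Rightarrow> ('a \<Rightarrow> 'a) \<Rightarrow> 'b \<Rightarrow> 'b) \<Rightarrow> bool" where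
  "preserves_intersections Fobj Fmap \<longleftrightarrow>
     (\<forall>X Y f. f \<in> X \<rightarrow> Y \<and> inj_on f X \<longrightarrow> inj_on (Fmap X Y f) (Fobj X)) \<and>
     (\<forall>X \<Z>. \<Z> \<noteq> {} \<and> (\<forall>Z\<in>\<Z>. Z \<subseteq> X) \<longrightarrow>
        Fimg Fobj Fmap (\<Inter>\<Z>) X = (\<Inter>Z\<in>\<Z>. Fimg Fobj Fmap Z X))"

text \<open>\<ominus>_f(S) for f : X \<rightarrow> H Y: the least Z \<subseteq> Y such that f restricted to S factors through
  H Z \<rightarrow> H Y.\<close>
definition ominus :: "('a set \<Rightarrow> 'b set) \<Rightarrow> ('a set \<Rightarrow> 'a set \<Rightarrow> ('a \<Rightarrow> 'a) \<Rightarrow> 'b \<Rightarrow> 'b)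
     \<Rightarrow> 'a set \<Rightarrow> ('a \<Rightarrow> 'b) \<Rightarrow> 'a set \<Rightarrow> 'a set" where
  "ominus Hobj Hmap Y f S = (LEAST Z. Z \<subseteq> Y \<and> f ` S \<subseteq> Fimg Hobj Hmap Z Y)"

text \<open>k-th step of the reachable-part construction of an I-pointed H-coalgebra (C, d, iC).\<close>
primrec kstep :: "('a set \<Rightarrow> 'b set) \<Rightarrow> ('a set \<Rightarrow> 'a set \<Rightarrow> ('a \<Rightarrow> 'a) \<Rightarrow> 'b \<Rightarrow> 'b)
     \<Rightarrow> 'a set \<Rightarrow> ('a \<Rightarrow> 'b) \<Rightarrow> 'i set \<Rightarrow> ('i \<Rightarrow> 'a) \<Rightarrow> nat \<Rightarrow> 'a set" where
  "kstep Hobj Hmap C d I iC 0 = iC ` I"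
| "kstep Hobj Hmap C d I iC (Suc k) = ominus Hobj Hmap C d (kstep Hobj Hmap C d I iC k)"

definition Pobj :: "'a set \<Rightarrow> 'a set set" where "Pobj X = Pow X"
definition Pmap :: "'a set \<Rightarrow> 'a set \<Rightarrow> ('a \<Rightarrow> 'a) \<Rightarrow> 'a set \<Rightarrow> 'a set" where "Pmap X Y f A = f ` A"

definition tau :: "('a set \<Rightarrow> 'b set) \<Rightarrow> ('a set \<Rightarrow> 'a set \<Rightarrow> ('a \<Rightarrow> 'a) \<Rightarrow> 'b \<Rightarrow> 'b) \<Rightarrow> 'a set \<Rightarrow> 'b \<Rightarrow> 'a set" where
  "tau Fobj Fmap X t = {x \<in> X. t \<notin> Fimg Fobj Fmap (X - {x}) X}"

end

theory Submission
  imports Defs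
begin

lemma pi_inter:
  assumes "preserves_intersections Fobj Fmap" "ZZ \<noteq> {}" "\<forall>Z\<in>ZZ. Z \<subseteq> X"
  shows "Fimg Fobj Fmap (\<Inter>ZZ) X = (\<Inter>Z\<in>ZZ. Fimg Fobj Fmap Z X)"
  using assms unfolding preserves_intersections_def by blast

lemma Fimg_mono:
  assumes "preserves_intersections Fobj Fmap" "Z0 \<subseteq> Z1" "Z1 \<subseteq> C"
  shows "Fimg Fobj Fmap Z0 C \<subseteq> Fimg Fobj Fmap Z1 C"
proof -
  have "Fimg Fobj Fmap (\<Inter>{Z0,Z1}) C = (\<Inter>Z\<in>{Z0,Z1}. Fimg Fobj Fmap Z C)"
    using assms by (intro pi_inter) auto
  moreover have "\<Inter>{Z0,Z1} = Z0" using assms by auto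
  ultimately show ?thesis by auto
qed

lemma Fimg_tau:
  assumes sf: "set_functor Fobj Fmap" and pi: "preserves_intersections Fobj Fmap"
    and t: "t \<in> Fobj C" and Z: "Z \<subseteq> C"
  shows "t \<in> Fimg Fobj Fmap Z C \<longleftrightarrow> tau Fobj Fmap C t \<subseteq> Z"
proof
  assume h: "t \<in> Fimg Fobj Fmap Z C"
  show "tau Fobj Fmap C t \<subseteq> Z"
  proof
    fix x assume x: "x \<in> tau Fobj Fmap C t"
    show "x \<in> Z"
    proof (rule ccontr)
      assume "x \<notin> Z"
      hence "Z \<subseteq> C - {x}" using Z by auto
      hence "t \<in> Fimg Fobj Fmap (C - {x}) C" using Fimg_mono[OF pi, of Z "C - {x}" C] h by auto
      thus False using x unfolding tau_def by auto
    qed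
  qed
next
  assume h: "tau Fobj Fmap C t \<subseteq> Z"
  define ZZ where "ZZ = {W. W \<subseteq> C \<and> t \<in> Fimg Fobj Fmap W C}"
  have "Fmap C C id t = t" using sf t unfolding set_functor_def by blast
  hence "t \<in> Fimg Fobj Fmap C C" unfolding Fimg_def using t by (metis image_eqI)
  hence CZ: "C \<in> ZZ" unfolding ZZ_def by auto
  have "Fimg Fobj Fmap (\<Inter>ZZ) C = (\<Inter>W\<in>ZZ. Fimg Fobj Fmap W C)"
    using pi CZ by (intro pi_inter) (auto simp: ZZ_def)
  hence t0: "t \<in> Fimg Fobj Fmap (\<Inter>ZZ) C" unfolding ZZ_def by auto
  have "\<Inter>ZZ \<subseteq> tau Fobj Fmap C t"
  proof
    fix x assume x: "x \<in> \<Inter>ZZ"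
    hence xC: "x \<in> C" using CZ by auto
    have "t \<notin> Fimg Fobj Fmap (C - {x}) C"
    proof
      assume "t \<in> Fimg Fobj Fmap (C - {x}) C"
      hence "C - {x} \<in> ZZ" unfolding ZZ_def by auto
      thus False using x by auto
    qed
    thus "x \<in> tau Fobj Fmap C t" using xC unfolding tau_def by auto
  qed
  hence "\<Inter>ZZ \<subseteq> Z" using h by auto
  thus "t \<in> Fimg Fobj Fmap Z C" using Fimg_mono[OF pi _ Z] t0 by blast
qed

lemma tau_sub: "tau Fobj Fmap C t \<subseteq> C"
  unfolding tau_def by blast

lemma ominus_F:
  assumes sf: "set_functor Fobj Fmap" and pi: "preserves_intersections Fobj Fmap"
    and c: "c \<in> C \<rightarrow> Fobj C" and S: "S \<subseteq> C"
  shows "ominus Fobj Fmap C c S = (\<Union>s\<in>S. tau Fobj Fmap C (c s))"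
proof -
  let ?U = "\<Union>s\<in>S. tau Fobj Fmap C (c s)"
  have sub: "?U \<subseteq> C" using tau_sub by (rule UN_least)
  have cs: "c s \<in> Fobj C" if "s \<in> S" for s using c S that by blast
  have P1: "?U \<subseteq> C \<and> c ` S \<subseteq> Fimg Fobj Fmap ?U C"
  proof (intro conjI sub subsetI)
    fix y assume "y \<in> c ` S"
    then obtain s where s: "s \<in> S" "y = c s" by blast
    have "tau Fobj Fmap C (c s) \<subseteq> ?U" using s(1) by blast
    hence "c s \<in> Fimg Fobj Fmap ?U C"
      using Fimg_tau[OF sf pi cs[OF s(1)] sub] by simp
    thus "y \<in> Fimg Fobj Fmap ?U C" using s(2) by simp
  qed
  have P2: "?U \<subseteq> Y" if Y: "Y \<subseteq> C \<and> c ` S \<subseteq> Fimg Fobj Fmap Y C" for Y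
  proof (rule UN_least)
    fix s assume s: "s \<in> S"
    have "c s \<in> Fimg Fobj Fmap Y C" using Y s by blast
    thus "tau Fobj Fmap C (c s) \<subseteq> Y" using Fimg_tau[OF sf pi cs[OF s]] Y by simp
  qed
  show ?thesis unfolding ominus_def
    by (rule Least_equality[where P="\<lambda>Z. Z \<subseteq> C \<and> c ` S \<subseteq> Fimg Fobj Fmap Z C", OF P1 P2])
qed

lemma Fimg_P: "Fimg Pobj Pmap Z C = Pow Z"
  unfolding Fimg_def Pobj_def Pmap_def by auto

lemma ominus_P:
  assumes "\<forall>s\<in>S. d s \<subseteq> C"
  shows "ominus Pobj Pmap C d S = (\<Union>s\<in>S. d s)"
proof -
  have P1: "(\<Union>s\<in>S. d s) \<subseteq> C \<and> d ` S \<subseteq> Pow (\<Union>s\<in>S. d s)" using assms by blast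
  have P2: "(\<Union>s\<in>S. d s) \<subseteq> Y" if "Y \<subseteq> C \<and> d ` S \<subseteq> Pow Y" for Y using that by blast
  show ?thesis unfolding ominus_def Fimg_P
    by (rule Least_equality[where P="\<lambda>Z. Z \<subseteq> C \<and> d ` S \<subseteq> Pow Z", OF P1 P2])
qed

theorem corollary5p26:
  fixes Fobj :: "'a set \<Rightarrow> 'b set"
    and Fmap :: "'a set \<Rightarrow> 'a set \<Rightarrow> ('a \<Rightarrow> 'a) \<Rightarrow> 'b \<Rightarrow> 'b"
    and C :: "'a set" and c :: "'a \<Rightarrow> 'b" and I :: "'i set" and iC :: "'i \<Rightarrow> 'a"
  assumes "set_functor Fobj Fmap"
    and "preserves_intersections Fobj Fmap"
    and "c \<in> C \<rightarrow> Fobj C"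
    and "iC \<in> I \<rightarrow> C"
  shows "\<forall>k. kstep Fobj Fmap C c I iC k = kstep Pobj Pmap C (\<lambda>x. tau Fobj Fmap C (c x)) I iC k"
proof
  fix k
  have "kstep Fobj Fmap C c I iC k = kstep Pobj Pmap C (\<lambda>x. tau Fobj Fmap C (c x)) I iC k
        \<and> kstep Fobj Fmap C c I iC k \<subseteq> C"
  proof (induction k)
    case 0
    then show ?case using assms(4) by auto
  next
    case (Suc k)
    have td: "\<forall>s\<in>kstep Fobj Fmap C c I iC k. tau Fobj Fmap C (c s) \<subseteq> C"
      unfolding tau_def by auto
    have e1: "kstep Fobj Fmap C c I iC (Suc k) = (\<Union>s\<in>kstep Fobj Fmap C c I iC k. tau Fobj Fmap C (c s))"
      unfolding kstep.simps(2) by (rule ominus_F[OF assms(1,2,3) conjunct2[OF Suc.IH]])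
    have e2: "kstep Pobj Pmap C (\<lambda>x. tau Fobj Fmap C (c x)) I iC (Suc k) = (\<Union>s\<in>kstep Fobj Fmap C c I iC k. tau Fobj Fmap C (c s))"
      unfolding kstep.simps(2) conjunct1[OF Suc.IH, symmetric] by (rule ominus_P[OF td])
    have e3: "(\<Union>s\<in>kstep Fobj Fmap C c I iC k. tau Fobj Fmap C (c s)) \<subseteq> C" using td by blast
    show ?case using e1 e2 e3 by simp
  qed
  thus "kstep Fobj Fmap C c I iC k = kstep Pobj Pmap C (\<lambda>x. tau Fobj Fmap C (c x)) I iC k" by simp
qed

end
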